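(* Let $I$ be an interval containing $t_0$, let $\mu$ be a nonvanishing differentiable real function on $I$ and $\omega^2$ a real function on $I$. Let $r(t)$ be the solution of the initial value problem $$\ddot r+\frac{\dot\mu(t)}{\mu(t)}\dot r+\omega^2(t) r=0,\qquad r(t_0)=r_0\neq 0,\quad \dot r(t_0)=0,$$ and define $$\eta(x,t)=\frac{r(t_0)}{r(t)}\,x,\qquad \tau(t)=r^2(t_0)\int_{t_0}^{t}\frac{d\xi}{\mu(\xi)r^2(\xi)}\quad(\text{so }\tau(t_0)=0).$$ Let $\varphi(\eta,\tau)$ be the solution of the initial value problem for the classical heat equation $$\varphi_\tau=\tfrac12\varphi_{\eta\eta},\qquad \varphi(\eta,0)=\Phi(\eta,t_0),\quad -\infty<\eta<\infty.$$ Then the initial value problem for the variable parametric parabolic equation $$\frac{\partial\Phi}{\partial t}=\frac{1}{2\mu(t)}\frac{\partial^2\Phi}{\partial x^2}+\frac{\mu(t)\omega^2(t)}{2}x^2\Phi,\qquad \Phi(x,t)|_{t=t_0}=\Phi(x,t_0),\quad -\infty<x<\infty,$$ has the solution $$\Phi(x,t)=\sqrt{\frac{r(t_0)}{r(t)}}\;\exp\!\left(-\frac{\mu(t)\dot r(t)}{2r(t)}x^2\right)\varphi\big(\eta(x,t),\tau(t)\big).$$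
   Context: Dots denote derivatives with respect to $t$. The formula is considered for $t$ at which $r(t)\neq 0$; the square root (equivalently $\tfrac12\ln(r(t_0)/r(t))$ in the exponent) is allowed to be complex-valued. *)

theory Defs
  imports "HOL-Analysis.Analysis"
begin

definition oint :: "real \<Rightarrow> real \<Rightarrow> (real \<Rightarrow> real) \<Rightarrow> real" where
  "oint a b f = (if a \<le> b then integral {a..b} f else - integral {b..a} f)"

definition tau :: "(real \<Rightarrow> real) \<Rightarrow> (real \<Rightarrow> real) \<Rightarrow> real \<Rightarrow> real \<Rightarrow> real" where
  "tau \<mu> r t0 t = (r t0)\<^sup>2 * oint t0 t (\<lambda>\<xi>. 1 / (\<mu> \<xi> * (r \<xi>)\<^sup>2))"

definition eta :: "(real \<Rightarrow> real) \<Rightarrow> real \<Rightarrow> real \<Rightarrow> real \<Rightarrow> real" where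
  "eta r t0 x t = r t0 / r t * x"

text \<open>The transformation formula for Phi; rd is the derivative of r.\<close>
definition Phi :: "(real \<Rightarrow> real) \<Rightarrow> (real \<Rightarrow> real) \<Rightarrow> (real \<Rightarrow> real)
     \<Rightarrow> (real \<Rightarrow> real \<Rightarrow> complex) \<Rightarrow> real \<Rightarrow> real \<Rightarrow> real \<Rightarrow> complex" where
  "Phi \<mu> r rd \<phi> t0 x t =
     csqrt (complex_of_real (r t0 / r t))
     * exp (complex_of_real (- (\<mu> t * rd t) / (2 * r t) * x\<^sup>2))
     * \<phi> (eta r t0 x t) (tau \<mu> r t0 t)"

end

theory Submission
  imports Defs
begin


lemma oint_split:
  fixes f :: "real \<Rightarrow> real"
  assumes "continuous_on {A..B} f" "A \<le> t0" "t0 \<le> B" "s \<in> {A..B}"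
  shows "oint t0 s f = integral {A..s} f - integral {A..t0} f"
proof (cases "t0 \<le> s")
  case True
  have fi: "f integrable_on {A..s}"
    by (intro integrable_continuous_interval continuous_on_subset[OF assms(1)]) (use assms in auto)
  have "integral {A..t0} f + integral {t0..s} f = integral {A..s} f"
    using Henstock_Kurzweil_Integration.integral_combine[OF _ _ fi, of t0] assms True by simp
  then show ?thesis using True by (simp add: oint_def)
next
  case False
  have fi: "f integrable_on {A..t0}"
    by (intro integrable_continuous_interval continuous_on_subset[OF assms(1)]) (use assms in auto)
  have "integral {A..s} f + integral {s..t0} f = integral {A..t0} f"
    using Henstock_Kurzweil_Integration.integral_combine[OF _ _ fi, of s] assms False by simp
  then show ?thesis using False by (simp add: oint_def)
qed

lemma left_pt:
  fixes I :: "real set"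
  assumes "is_interval I" "t \<in> I" "\<delta> > 0"
  shows "\<exists>a. a \<in> I \<and> a \<le> t \<and> t - \<delta> < a \<and> (\<exists>\<rho>>0. \<forall>s\<in>I. t - \<rho> < s \<and> s \<le> t \<longrightarrow> a \<le> s)"
proof (cases "\<exists>c\<in>I. c < t")
  case True
  then obtain c where c: "c \<in> I" "c < t" by auto
  define a where "a = max c (t - \<delta>/2)"
  have "c \<le> a" "a \<le> t" using c assms(3) by (auto simp: a_def)
  then have "a \<in> I" using assms(1) c assms(2) unfolding is_interval_1 by blast
  moreover have "t - a > 0" using c assms(3) by (simp add: a_def)
  ultimately show ?thesis using c assms(3)
    by (intro exI[of _ a]) (auto simp: a_def intro!: exI[of _ "t - a"])
next
  case False
  then show ?thesis using assms by (intro exI[of _ t]) (auto intro!: exI[of _ 1] simp: not_less)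
qed

lemma right_pt:
  fixes I :: "real set"
  assumes "is_interval I" "t \<in> I" "\<delta> > 0"
  shows "\<exists>b. b \<in> I \<and> t \<le> b \<and> b < t + \<delta> \<and> (\<exists>\<rho>>0. \<forall>s\<in>I. s < t + \<rho> \<and> t \<le> s \<longrightarrow> s \<le> b)"
proof (cases "\<exists>c\<in>I. t < c")
  case True
  then obtain c where c: "c \<in> I" "t < c" by auto
  define b where "b = min c (t + \<delta>/2)"
  have "t \<le> b" "b \<le> c" using c assms(3) by (auto simp: b_def)
  then have "b \<in> I" using assms(1) c assms(2) unfolding is_interval_1 by blast
  moreover have "b - t > 0" using c assms(3) by (simp add: b_def)
  ultimately show ?thesis using c assms(3)
    by (intro exI[of _ b]) (auto simp: b_def intro!: exI[of _ "b - t"])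
next
  case False
  then show ?thesis using assms by (intro exI[of _ t]) (auto intro!: exI[of _ 1] simp: not_less)
qed

lemma oint_deriv:
  fixes I :: "real set" and \<mu> r :: "real \<Rightarrow> real"
  assumes I: "is_interval I" "t0 \<in> I" "t \<in> I"
    and cmu: "continuous_on I \<mu>" and cr: "continuous_on I r"
    and mnz: "\<And>s. s \<in> I \<Longrightarrow> \<mu> s \<noteq> 0"
    and seg: "\<forall>s\<in>closed_segment t0 t. r s \<noteq> 0"
  shows "((\<lambda>s. oint t0 s (\<lambda>\<xi>. 1 / (\<mu> \<xi> * (r \<xi>)\<^sup>2))) has_real_derivative (1 / (\<mu> t * (r t)\<^sup>2))) (at t within I)"
proof -
  define f where "f = (\<lambda>\<xi>. 1 / (\<mu> \<xi> * (r \<xi>)\<^sup>2))"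
  have rt: "r t \<noteq> 0" using seg by auto
  have "continuous (at t within I) r" using cr I(3) by (simp add: continuous_on_eq_continuous_within)
  then obtain \<delta> where \<delta>: "\<delta> > 0" "\<And>s. s \<in> I \<Longrightarrow> dist s t < \<delta> \<Longrightarrow> dist (r s) (r t) < \<bar>r t\<bar>"
    unfolding continuous_within_eps_delta using rt by (metis zero_less_abs_iff)
  have rnz: "r s \<noteq> 0" if "s \<in> I" "\<bar>s - t\<bar> < \<delta>" for s
    using \<delta>(2)[OF that(1)] that(2) by (auto simp: dist_real_def)
  obtain a \<rho>1 where a: "a \<in> I" "a \<le> t" "t - \<delta> < a" "\<rho>1 > 0" "\<And>s. s \<in> I \<Longrightarrow> t - \<rho>1 < s \<Longrightarrow> s \<le> t \<Longrightarrow> a \<le> s"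
    using left_pt[OF I(1,3) \<delta>(1)] by blast
  obtain b \<rho>2 where b: "b \<in> I" "t \<le> b" "b < t + \<delta>" "\<rho>2 > 0" "\<And>s. s \<in> I \<Longrightarrow> s < t + \<rho>2 \<Longrightarrow> t \<le> s \<Longrightarrow> s \<le> b"
    using right_pt[OF I(1,3) \<delta>(1)] by blast
  define A where "A = min a t0"
  define B where "B = max b t0"
  have AI: "A \<in> I" and BI: "B \<in> I" using a b I by (auto simp: A_def B_def min_def max_def)
  have KI: "{A..B} \<subseteq> I" using AI BI I(1) unfolding is_interval_1 atLeastAtMost_iff subset_iff by blast
  have rK: "r s \<noteq> 0" if "s \<in> {A..B}" for s
  proof (cases "a \<le> s \<and> s \<le> b")
    case True
    have "s \<in> I" using KI that by auto
    moreover have "\<bar>s - t\<bar> < \<delta>" using True a b by auto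
    ultimately show ?thesis using rnz by blast
  next
    case False
    then have "s \<in> closed_segment t0 t" using that a b
      by (auto simp: A_def B_def closed_segment_eq_real_ivl)
    then show ?thesis using seg by auto
  qed
  have cf: "continuous_on {A..B} f" unfolding f_def
    by (intro continuous_intros continuous_on_subset[OF cmu KI] continuous_on_subset[OF cr KI])
       (use rK mnz KI in auto)
  have tK: "t \<in> {A..B}" using a b by (auto simp: A_def B_def)
  have t0K: "A \<le> t0" "t0 \<le> B" by (auto simp: A_def B_def)
  have "((\<lambda>u. integral {A..u} f) has_real_derivative f t) (at t within {A..B})"
    using integral_has_vector_derivative[OF cf tK] by (simp add: has_real_derivative_iff_has_vector_derivative)
  then have "((\<lambda>u. integral {A..u} f - integral {A..t0} f) has_real_derivative f t) (at t within {A..B})"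
    by (auto intro!: derivative_eq_intros)
  then have d: "((\<lambda>u. oint t0 u f) has_real_derivative f t) (at t within {A..B})"
    by (rule has_field_derivative_transform_within[where d=1]) (use tK oint_split[OF cf t0K] in auto)
  define \<rho> where "\<rho> = min \<rho>1 \<rho>2"
  have "at t within {A..B} = at t within I"
  proof (rule at_within_nhd[of _ "ball t \<rho>"])
    show "t \<in> ball t \<rho>" "open (ball t \<rho>)" using a b by (auto simp: \<rho>_def)
    show "{A..B} \<inter> ball t \<rho> - {t} = I \<inter> ball t \<rho> - {t}"
    proof
      show "{A..B} \<inter> ball t \<rho> - {t} \<subseteq> I \<inter> ball t \<rho> - {t}" using KI by auto
      show "I \<inter> ball t \<rho> - {t} \<subseteq> {A..B} \<inter> ball t \<rho> - {t}"
      proof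
        fix s assume s: "s \<in> I \<inter> ball t \<rho> - {t}"
        then have "\<bar>s - t\<bar> < \<rho>" by (auto simp: dist_real_def)
        have sI: "s \<in> I" using s by auto
        have "s \<in> {A..B}"
        proof (cases "s \<le> t")
          case True
          then have "a \<le> s" using a(5)[OF sI] \<open>\<bar>s - t\<bar> < \<rho>\<close> by (auto simp: \<rho>_def)
          then show ?thesis using True b(2) by (auto simp: A_def B_def)
        next
          case False
          then have "s \<le> b" using b(5)[OF sI] \<open>\<bar>s - t\<bar> < \<rho>\<close> by (auto simp: \<rho>_def)
          then show ?thesis using False a(2) by (auto simp: A_def B_def)
        qed
        then show "s \<in> {A..B} \<inter> ball t \<rho> - {t}" using s by auto
      qed
    qed
  qed
  then show ?thesis using d unfolding f_def by simp
qed




lemma vd_exp_real: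
  assumes "(f has_real_derivative D) (at y within S)"
  shows "((\<lambda>z. exp (complex_of_real (f z))) has_vector_derivative (of_real D * exp (of_real (f y)))) (at y within S)"
proof -
  have "((exp \<circ> (\<lambda>z. complex_of_real (f z))) has_vector_derivative (of_real D * exp (of_real (f y)))) (at y within S)"
    by (rule field_vector_diff_chain_within[OF has_vector_derivative_of_real[OF assms]])
       (rule has_field_derivative_at_within[OF DERIV_exp])
  then show ?thesis by (simp add: o_def)
qed

lemma vd_csqrt_real:
  assumes "(f has_real_derivative D) (at y within S)" "f y > 0"
  shows "((\<lambda>z. csqrt (complex_of_real (f z))) has_vector_derivative (of_real D * inverse (2 * csqrt (of_real (f y))))) (at y within S)"
proof -
  have nz: "complex_of_real (f y) \<notin> \<real>\<^sub>\<le>\<^sub>0" using assms(2) by (simp add: complex_nonpos_Reals_iff)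
  have "((csqrt \<circ> (\<lambda>z. complex_of_real (f z))) has_vector_derivative (of_real D * inverse (2 * csqrt (of_real (f y))))) (at y within S)"
    by (rule field_vector_diff_chain_within[OF has_vector_derivative_of_real[OF assms(1)]])
       (rule has_field_derivative_at_within[OF has_field_derivative_csqrt[OF nz]])
  then show ?thesis by (simp add: o_def)
qed

lemma vd_curve:
  fixes \<phi> :: "real \<Rightarrow> real \<Rightarrow> complex"
  assumes "(a has_real_derivative Da) (at y within S)" "(b has_real_derivative Db) (at y within S)"
    and "((\<lambda>(u, v). \<phi> u v) has_derivative (\<lambda>(h, k). h *\<^sub>R P + k *\<^sub>R Q)) (at (a y, b y))"
  shows "((\<lambda>z. \<phi> (a z) (b z)) has_vector_derivative (Da *\<^sub>R P + Db *\<^sub>R Q)) (at y within S)"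
proof -
  have g: "((\<lambda>z. (a z, b z)) has_derivative (\<lambda>h. (Da * h, Db * h))) (at y within S)"
    using assms(1,2) unfolding has_field_derivative_def by (intro has_derivative_Pair) auto
  have "(((\<lambda>(u, v). \<phi> u v) \<circ> (\<lambda>z. (a z, b z))) has_derivative
          ((\<lambda>(h, k). h *\<^sub>R P + k *\<^sub>R Q) \<circ> (\<lambda>h. (Da * h, Db * h)))) (at y within S)"
    by (rule diff_chain_within[OF g]) (rule has_derivative_at_withinI, simp add: assms(3))
  moreover have "((\<lambda>(h, k). h *\<^sub>R P + k *\<^sub>R Q) \<circ> (\<lambda>h. (Da * h, Db * h))) = (\<lambda>h. h *\<^sub>R (Da *\<^sub>R P + Db *\<^sub>R Q))"
    by (auto simp: fun_eq_iff algebra_simps)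
  ultimately show ?thesis by (simp add: has_vector_derivative_def o_def)
qed

lemma vd_lin:
  fixes g :: "real \<Rightarrow> complex"
  assumes "(g has_vector_derivative g') (at (B * y))"
  shows "((\<lambda>z. g (B * z)) has_vector_derivative (B *\<^sub>R g')) (at y)"
proof -
  have l: "((\<lambda>z. B * z) has_vector_derivative B) (at y)"
    using has_real_derivative_iff_has_vector_derivative[THEN iffD1, OF DERIV_cmult_Id] by simp
  have "((g \<circ> (\<lambda>z. B * z)) has_vector_derivative (B *\<^sub>R g')) (at y)"
    by (rule vector_diff_chain_within[OF l]) (rule has_vector_derivative_at_within, simp add: assms)
  then show ?thesis by (simp add: o_def)
qed




lemma sign_pos:
  fixes r :: "real \<Rightarrow> real" and I :: "real set"
  assumes "is_interval I" "t0 \<in> I" "t \<in> I" "continuous_on I r" "\<forall>s\<in>closed_segment t0 t. r s \<noteq> 0"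
  shows "r t0 / r t > 0"
proof (rule ccontr)
  assume "\<not> r t0 / r t > 0"
  moreover have "r t0 \<noteq> 0" "r t \<noteq> 0" using assms(5) by auto
  ultimately have sg: "(r t0 < 0 \<and> 0 < r t) \<or> (r t < 0 \<and> 0 < r t0)"
    by (smt (verit) divide_pos_pos divide_neg_neg)
  have "closed_segment t0 t \<subseteq> I"
    using assms(1-3) by (simp add: closed_segment_subset is_interval_convex)
  then have "connected (r ` closed_segment t0 t)"
    by (intro connected_continuous_image continuous_on_subset[OF assms(4)]) auto
  moreover have "r t0 \<in> r ` closed_segment t0 t" "r t \<in> r ` closed_segment t0 t" by auto
  ultimately have "0 \<in> r ` closed_segment t0 t"
    using sg connectedD_interval by (metis less_eq_real_def)
  then show False using assms(5) by auto
qed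




theorem proposition1:
  fixes I :: "real set" and t0 r0 :: real
    and \<mu> \<mu>d w2 r rd rdd :: "real \<Rightarrow> real"
    and \<phi> \<phi>\<eta> \<phi>\<eta>\<eta> \<phi>\<tau> :: "real \<Rightarrow> real \<Rightarrow> complex"
    and \<Phi>0 :: "real \<Rightarrow> complex"
  assumes I: "is_interval I" "t0 \<in> I"
    and mu_nz: "\<And>t. t \<in> I \<Longrightarrow> \<mu> t \<noteq> 0"
    and mu_deriv: "\<And>t. t \<in> I \<Longrightarrow> (\<mu> has_real_derivative \<mu>d t) (at t within I)"
    and r_deriv: "\<And>t. t \<in> I \<Longrightarrow> (r has_real_derivative rd t) (at t within I)"
    and rd_deriv: "\<And>t. t \<in> I \<Longrightarrow> (rd has_real_derivative rdd t) (at t within I)"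
    and ode: "\<And>t. t \<in> I \<Longrightarrow> rdd t + \<mu>d t / \<mu> t * rd t + w2 t * r t = 0"
    and init_r: "r t0 = r0" "r0 \<noteq> 0" "rd t0 = 0"
    and heat: "\<And>\<eta> t. t \<in> I \<Longrightarrow> (\<forall>s\<in>closed_segment t0 t. r s \<noteq> 0) \<Longrightarrow>
        ((\<lambda>(a, b). \<phi> a b) has_derivative
            (\<lambda>(h, k). h *\<^sub>R \<phi>\<eta> \<eta> (tau \<mu> r t0 t) + k *\<^sub>R \<phi>\<tau> \<eta> (tau \<mu> r t0 t)))
          (at (\<eta>, tau \<mu> r t0 t))
        \<and> ((\<lambda>a. \<phi>\<eta> a (tau \<mu> r t0 t)) has_vector_derivative \<phi>\<eta>\<eta> \<eta> (tau \<mu> r t0 t)) (at \<eta>)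
        \<and> \<phi>\<tau> \<eta> (tau \<mu> r t0 t) = (1/2) * \<phi>\<eta>\<eta> \<eta> (tau \<mu> r t0 t)"
    and heat_init: "\<And>\<eta>. \<phi> \<eta> 0 = \<Phi>0 \<eta>"
  shows "(\<forall>x. Phi \<mu> r rd \<phi> t0 x t0 = \<Phi>0 x)
    \<and> (\<forall>t\<in>I. (\<forall>s\<in>closed_segment t0 t. r s \<noteq> 0) \<longrightarrow> (\<forall>x.
        \<exists>\<Phi>t \<Phi>x \<Phi>xx.
          ((\<lambda>s. Phi \<mu> r rd \<phi> t0 x s) has_vector_derivative \<Phi>t) (at t within I)
          \<and> (\<forall>y. ((\<lambda>z. Phi \<mu> r rd \<phi> t0 z t) has_vector_derivative \<Phi>x y) (at y))
          \<and> (\<Phi>x has_vector_derivative \<Phi>xx) (at x)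
          \<and> \<Phi>t = complex_of_real (1 / (2 * \<mu> t)) * \<Phi>xx
                 + complex_of_real (\<mu> t * w2 t / 2 * x\<^sup>2) * Phi \<mu> r rd \<phi> t0 x t))"
proof -
  have part1: "\<forall>x. Phi \<mu> r rd \<phi> t0 x t0 = \<Phi>0 x"
    using init_r heat_init by (simp add: Phi_def eta_def tau_def oint_def)
  have cmu: "continuous_on I \<mu>" unfolding continuous_on_eq_continuous_within
    using mu_deriv DERIV_continuous by blast
  have cr: "continuous_on I r" unfolding continuous_on_eq_continuous_within
    using r_deriv DERIV_continuous by blast
  have part2: "\<forall>t\<in>I. (\<forall>s\<in>closed_segment t0 t. r s \<noteq> 0) \<longrightarrow> (\<forall>x.
        \<exists>\<Phi>t \<Phi>x \<Phi>xx.
          ((\<lambda>s. Phi \<mu> r rd \<phi> t0 x s) has_vector_derivative \<Phi>t) (at t within I)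
          \<and> (\<forall>y. ((\<lambda>z. Phi \<mu> r rd \<phi> t0 z t) has_vector_derivative \<Phi>x y) (at y))
          \<and> (\<Phi>x has_vector_derivative \<Phi>xx) (at x)
          \<and> \<Phi>t = complex_of_real (1 / (2 * \<mu> t)) * \<Phi>xx
                 + complex_of_real (\<mu> t * w2 t / 2 * x\<^sup>2) * Phi \<mu> r rd \<phi> t0 x t)"
  proof (intro ballI impI allI)
    fix t x assume tI: "t \<in> I" and seg: "\<forall>s\<in>closed_segment t0 t. r s \<noteq> 0"
    have rt: "r t \<noteq> 0" using seg by auto
    have rt0: "r t0 \<noteq> 0" using init_r by simp
    have mt: "\<mu> t \<noteq> 0" using mu_nz tI by simp
    define P where "P = r t0 / r t"
    have Ppos: "P > 0" unfolding P_def by (rule sign_pos[OF I tI cr seg])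
    define sP where "sP = sqrt P"
    have sPpos: "sP > 0" using Ppos by (simp add: sP_def)
    define Tt where "Tt = tau \<mu> r t0 t"
    define al where "al = - (\<mu> t * rd t) / (2 * r t)"
    define Q where "Q = al * x\<^sup>2"
    define eQ where "eQ = exp Q"
    define B where "B = r t0 / r t"
    define Fv where "Fv = \<phi> (B * x) Tt"
    define G where "G = \<phi>\<eta> (B * x) Tt"
    define H where "H = \<phi>\<eta>\<eta> (B * x) Tt"
    have hx: "((\<lambda>(a, b). \<phi> a b) has_derivative
            (\<lambda>(h, k). h *\<^sub>R \<phi>\<eta> e Tt + k *\<^sub>R \<phi>\<tau> e Tt)) (at (e, Tt))"
        "((\<lambda>a. \<phi>\<eta> a Tt) has_vector_derivative \<phi>\<eta>\<eta> e Tt) (at e)"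
        "\<phi>\<tau> e Tt = (1/2) * \<phi>\<eta>\<eta> e Tt" for e
      using heat[OF tI seg, of e] unfolding Tt_def by auto
    have c0: "csqrt (complex_of_real P) = of_real sP" using Ppos by (simp add: sP_def)
    define p' where "p' = - (r t0 * rd t) / (r t)\<^sup>2"
    have dp: "((\<lambda>s. r t0 / r s) has_real_derivative p') (at t within I)"
      unfolding p'_def using rt
      by (auto intro!: derivative_eq_intros r_deriv[OF tI] simp: field_simps power2_eq_square)
    define q' where "q' = - ((\<mu>d t * rd t + \<mu> t * rdd t) * (2 * r t) - \<mu> t * rd t * (2 * rd t)) / (2 * r t)\<^sup>2 * x\<^sup>2"
    have dq: "((\<lambda>s. - (\<mu> s * rd s) / (2 * r s) * x\<^sup>2) has_real_derivative q') (at t within I)"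
      unfolding q'_def using rt
      by (auto intro!: derivative_eq_intros r_deriv[OF tI] mu_deriv[OF tI] rd_deriv[OF tI] simp: field_simps power2_eq_square)
    define T' where "T' = (r t0)\<^sup>2 * (1 / (\<mu> t * (r t)\<^sup>2))"
    have dT: "((\<lambda>s. tau \<mu> r t0 s) has_real_derivative T') (at t within I)"
      unfolding tau_def T'_def
      by (intro DERIV_cmult oint_deriv[OF I tI cmu cr mu_nz seg])
    define e' where "e' = p' * x"
    have de: "((\<lambda>s. eta r t0 x s) has_real_derivative e') (at t within I)"
      unfolding eta_def e'_def by (intro DERIV_cmult_right dp)
    have dC: "((\<lambda>s. csqrt (complex_of_real (r t0 / r s))) has_vector_derivative (of_real p' * inverse (2 * of_real sP))) (at t within I)"
      using vd_csqrt_real[OF dp] Ppos c0 unfolding P_def by simp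
    have dE: "((\<lambda>s. exp (complex_of_real (- (\<mu> s * rd s) / (2 * r s) * x\<^sup>2))) has_vector_derivative (of_real q' * of_real eQ)) (at t within I)"
      using vd_exp_real[OF dq] unfolding eQ_def Q_def al_def exp_of_real[symmetric] .
    have etat: "eta r t0 x t = B * x" by (simp add: eta_def B_def)
    have hx1: "((\<lambda>(a, b). \<phi> a b) has_derivative
            (\<lambda>(h, k). h *\<^sub>R \<phi>\<eta> (B * x) Tt + k *\<^sub>R \<phi>\<tau> (B * x) Tt)) (at (eta r t0 x t, tau \<mu> r t0 t))"
      using hx(1)[of "B*x"] unfolding etat Tt_def .
    have dF0: "((\<lambda>s. \<phi> (eta r t0 x s) (tau \<mu> r t0 s)) has_vector_derivative (e' *\<^sub>R G + T' *\<^sub>R \<phi>\<tau> (B * x) Tt)) (at t within I)"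
      unfolding G_def by (rule vd_curve[OF de dT hx1])
    have dF: "((\<lambda>s. \<phi> (eta r t0 x s) (tau \<mu> r t0 s)) has_vector_derivative (e' *\<^sub>R G + T' *\<^sub>R ((1/2) * H))) (at t within I)"
      using dF0 unfolding hx(3) H_def .
    have eE: "exp (complex_of_real (- (\<mu> t * rd t) / (2 * r t) * x\<^sup>2)) = of_real eQ"
      unfolding eQ_def Q_def al_def by (rule exp_of_real)
    have c0': "csqrt (complex_of_real (r t0 / r t)) = of_real sP" using c0 unfolding P_def .
    have dPhi: "((\<lambda>s. Phi \<mu> r rd \<phi> t0 x s) has_vector_derivative
        (of_real sP * of_real eQ * (e' *\<^sub>R G + T' *\<^sub>R ((1/2) * H))
         + (of_real sP * (of_real q' * of_real eQ) + of_real p' * inverse (2 * of_real sP) * of_real eQ) * Fv)) (at t within I)"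
      using has_vector_derivative_mult[OF has_vector_derivative_mult[OF dC dE] dF]
      unfolding Phi_def eE c0' etat Tt_def[symmetric] Fv_def[symmetric] .
    define \<Phi>x where "\<Phi>x = (\<lambda>y. of_real sP * exp (complex_of_real (al * y\<^sup>2)) * (of_real B * \<phi>\<eta> (B * y) Tt)
         + of_real sP * (complex_of_real (al * (2 * y)) * exp (complex_of_real (al * y\<^sup>2))) * \<phi> (B * y) Tt)"
    have cB: "csqrt (complex_of_real B) = of_real sP" using c0 unfolding P_def B_def .
    have phiz: "Phi \<mu> r rd \<phi> t0 z t = of_real sP * exp (complex_of_real (al * z\<^sup>2)) * \<phi> (B * z) Tt" for z
      unfolding Phi_def eta_def al_def[symmetric] B_def[symmetric] Tt_def[symmetric] cB ..
    have dal: "((\<lambda>z. al * z\<^sup>2) has_real_derivative al * (2 * y)) (at y)" for y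
      by (auto intro!: derivative_eq_intros)
    have dEy: "((\<lambda>z. exp (complex_of_real (al * z\<^sup>2))) has_vector_derivative
        (of_real (al * (2 * y)) * exp (complex_of_real (al * y\<^sup>2)))) (at y)" for y
      by (rule vd_exp_real[OF dal])
    have hxy: "((\<lambda>(a, b). \<phi> a b) has_derivative
            (\<lambda>(h, k). h *\<^sub>R \<phi>\<eta> (B * y) Tt + k *\<^sub>R \<phi>\<tau> (B * y) Tt)) (at (B * y, Tt))" for y
      using hx(1) .
    have dFy0: "((\<lambda>z. \<phi> (B * z) Tt) has_vector_derivative (B *\<^sub>R \<phi>\<eta> (B * y) Tt + 0 *\<^sub>R \<phi>\<tau> (B * y) Tt)) (at y)" for y
      by (rule vd_curve[OF DERIV_cmult_Id DERIV_const hxy])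
    have dFy: "((\<lambda>z. \<phi> (B * z) Tt) has_vector_derivative (of_real B * \<phi>\<eta> (B * y) Tt)) (at y)" for y
      using dFy0[of y] by (simp add: scaleR_conv_of_real)
    have dx: "((\<lambda>z. Phi \<mu> r rd \<phi> t0 z t) has_vector_derivative \<Phi>x y) (at y)" for y
      unfolding phiz \<Phi>x_def
      using has_vector_derivative_mult[OF has_vector_derivative_mult_right[OF dEy] dFy, of "of_real sP" y]
      by (simp add: algebra_simps)
    have dGy: "((\<lambda>z. \<phi>\<eta> (B * z) Tt) has_vector_derivative (of_real B * H)) (at x)"
      using vd_lin[OF hx(2)[of "B * x"]] by (simp add: H_def scaleR_conv_of_real)
    have dL: "((\<lambda>z. complex_of_real (al * (2 * z))) has_vector_derivative of_real (al * 2)) (at x)"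
      by (rule has_vector_derivative_of_real) (auto intro!: derivative_eq_intros)
    have eEx: "exp (complex_of_real (al * x\<^sup>2)) = of_real eQ" unfolding eQ_def Q_def by (rule exp_of_real)
    define \<Phi>xx where "\<Phi>xx = of_real sP * of_real eQ * (of_real B * (of_real B * H))
        + of_real sP * (of_real (al * (2 * x)) * of_real eQ) * (of_real B * G)
        + (of_real sP * (of_real (al * (2 * x)) * of_real eQ) * (of_real B * G)
        + of_real sP * (of_real (al * (2 * x)) * (of_real (al * (2 * x)) * of_real eQ) + of_real (al * 2) * of_real eQ) * Fv)"
    have d2: "(\<Phi>x has_vector_derivative \<Phi>xx) (at x)"
      using has_vector_derivative_add[OF
          has_vector_derivative_mult[OF has_vector_derivative_mult_right[OF dEy] has_vector_derivative_mult_right[OF dGy]]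
          has_vector_derivative_mult[OF has_vector_derivative_mult_right[OF has_vector_derivative_mult[OF dL dEy]] dFy],
          of "of_real sP" "of_real B" "of_real sP"]
      unfolding \<Phi>x_def \<Phi>xx_def eEx Fv_def G_def by (simp add: algebra_simps)
    have phixt: "Phi \<mu> r rd \<phi> t0 x t = of_real sP * of_real eQ * Fv"
      unfolding phiz eEx Fv_def ..
    have final: "of_real sP * of_real eQ * (e' *\<^sub>R G + T' *\<^sub>R ((1/2) * H))
         + (of_real sP * (of_real q' * of_real eQ) + of_real p' * inverse (2 * of_real sP) * of_real eQ) * Fv
       = complex_of_real (1 / (2 * \<mu> t)) * \<Phi>xx + complex_of_real (\<mu> t * w2 t / 2 * x\<^sup>2) * (of_real sP * of_real eQ * Fv)"
    proof -
      have sPsq: "sP * sP = P" using Ppos by (simp add: sP_def)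
      have inv: "inverse (2 * complex_of_real sP) = of_real (1 / (2 * sP))" by (simp add: inverse_eq_divide)
      have psP: "p' * (1 / (2 * sP)) = sP * (p' / (2 * P))"
        using sPpos sPsq Ppos by (simp add: field_simps)
      have rdd: "rdd t = - (\<mu>d t / \<mu> t * rd t) - w2 t * r t" using ode[OF tI] by simp
      have a1: "sP * (q' * eQ) + p' * (1 / (2 * sP)) * eQ
          = (1 / (2 * \<mu> t)) * (sP * ((al * (2 * x)) * ((al * (2 * x)) * eQ) + (al * 2) * eQ)) + (\<mu> t * w2 t / 2 * x\<^sup>2) * (sP * eQ)"
        unfolding psP unfolding q'_def p'_def al_def P_def rdd using rt rt0 mt
        by (simp add: field_simps power2_eq_square)
      have a2: "sP * eQ * e' = (1 / (2 * \<mu> t)) * (2 * (sP * ((al * (2 * x)) * eQ) * B))"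
        unfolding e'_def p'_def al_def B_def using rt rt0 mt
        by (simp add: field_simps power2_eq_square)
      have a3: "sP * eQ * (T' * (1/2)) = (1 / (2 * \<mu> t)) * (sP * eQ * (B * B))"
        unfolding T'_def B_def using rt rt0 mt
        by (simp add: field_simps power2_eq_square)
      have L: "of_real sP * of_real eQ * (e' *\<^sub>R G + T' *\<^sub>R ((1/2) * H))
         + (of_real sP * (of_real q' * of_real eQ) + of_real p' * inverse (2 * of_real sP) * of_real eQ) * Fv
         = complex_of_real (sP * (q' * eQ) + p' * (1 / (2 * sP)) * eQ) * Fv
           + complex_of_real (sP * eQ * e') * G + complex_of_real (sP * eQ * (T' * (1/2))) * H"
        unfolding inv by (simp add: scaleR_conv_of_real algebra_simps)
      have R: "complex_of_real (1 / (2 * \<mu> t)) * \<Phi>xx + complex_of_real (\<mu> t * w2 t / 2 * x\<^sup>2) * (of_real sP * of_real eQ * Fv)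
         = complex_of_real ((1 / (2 * \<mu> t)) * (sP * ((al * (2 * x)) * ((al * (2 * x)) * eQ) + (al * 2) * eQ)) + (\<mu> t * w2 t / 2 * x\<^sup>2) * (sP * eQ)) * Fv
           + complex_of_real ((1 / (2 * \<mu> t)) * (2 * (sP * ((al * (2 * x)) * eQ) * B))) * G
           + complex_of_real ((1 / (2 * \<mu> t)) * (sP * eQ * (B * B))) * H"
        unfolding \<Phi>xx_def by (simp add: algebra_simps)
      show ?thesis unfolding L R a1 a2 a3 ..
    qed
    show "\<exists>\<Phi>t \<Phi>x \<Phi>xx.
          ((\<lambda>s. Phi \<mu> r rd \<phi> t0 x s) has_vector_derivative \<Phi>t) (at t within I)
          \<and> (\<forall>y. ((\<lambda>z. Phi \<mu> r rd \<phi> t0 z t) has_vector_derivative \<Phi>x y) (at y))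
          \<and> (\<Phi>x has_vector_derivative \<Phi>xx) (at x)
          \<and> \<Phi>t = complex_of_real (1 / (2 * \<mu> t)) * \<Phi>xx
                 + complex_of_real (\<mu> t * w2 t / 2 * x\<^sup>2) * Phi \<mu> r rd \<phi> t0 x t"
      using dPhi dx d2 final unfolding phixt by blast
  qed
  show ?thesis using part1 part2 by blast
qed


end
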